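(* Let $n,m\ge 2$ and $G\in\mathcal{O}(K_{n,m})$. Then $G$ has the minimum number of edges among all graphs in $\mathcal{O}(K_{n,m})$ if and only if $G$ is a binary star; in this case $|E(G)|=n+m-1$.
   Context: The local complement $c_v(G)$ complements the edges among the neighbours of $v$. $\mathcal{O}(G)$ is the set of all graphs on the labelled vertex set $V(G)$ obtainable from $G$ by finite sequences of local complements. A binary star is a tree consisting of two star graphs whose centers are joined by an edge (equivalently, two adjacent vertices $a,b$ such that every other vertex is adjacent to exactly one of $a,b$ and to nothing else). *)

theory Defs
  imports Main
begin

(* A simple graph on a labelled vertex set V is represented by its edge set,
   a set of 2-element subsets of V. *)

definition nbrs :: "'a set set \<Rightarrow> 'a \<Rightarrow> 'a set" where
  "nbrs E v = {u. {u, v} \<in> E}"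

definition nbr_pairs :: "'a set set \<Rightarrow> 'a \<Rightarrow> 'a set set" where
  "nbr_pairs E v = {{x, y} | x y. x \<in> nbrs E v \<and> y \<in> nbrs E v \<and> x \<noteq> y}"

definition local_compl :: "'a \<Rightarrow> 'a set set \<Rightarrow> 'a set set" where
  "local_compl v E = (E - nbr_pairs E v) \<union> (nbr_pairs E v - E)"

inductive_set lc_orbit :: "'a set \<Rightarrow> 'a set set \<Rightarrow> 'a set set set"
  for V :: "'a set" and E0 :: "'a set set" where
  base: "E0 \<in> lc_orbit V E0"
| step: "E \<in> lc_orbit V E0 \<Longrightarrow> v \<in> V \<Longrightarrow> local_compl v E \<in> lc_orbit V E0"

definition complete_bipartite :: "'a set \<Rightarrow> 'a set \<Rightarrow> 'a set set" where
  "complete_bipartite A B = {{x, y} | x y. x \<in> A \<and> y \<in> B}"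

definition binary_star :: "'a set \<Rightarrow> 'a set set \<Rightarrow> bool" where
  "binary_star V E \<longleftrightarrow> (\<exists>a b S. a \<in> V \<and> b \<in> V \<and> a \<noteq> b \<and> S \<subseteq> V - {a, b} \<and>
      E = insert {a, b} ({{a, x} | x. x \<in> S} \<union> {{b, x} | x. x \<in> V - {a, b} - S}))"

end

theory Submission
  imports Defs
begin


definition wfg :: "'a set \<Rightarrow> 'a set set \<Rightarrow> bool" where
  "wfg V E \<longleftrightarrow> (\<forall>e\<in>E. \<exists>x y. x \<noteq> y \<and> x \<in> V \<and> y \<in> V \<and> e = {x, y})"

definition conn :: "'a set \<Rightarrow> 'a set set \<Rightarrow> bool" where
  "conn V E \<longleftrightarrow> (\<forall>X. X \<subseteq> V \<longrightarrow> X \<noteq> {} \<longrightarrow> X \<noteq> V \<longrightarrow> (\<exists>x\<in>X. \<exists>y\<in>V - X. {x, y} \<in> E))"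

definition Rel :: "'a set set \<Rightarrow> 'a \<Rightarrow> 'a \<Rightarrow> bool" where
  "Rel E x y \<longleftrightarrow> (\<forall>z. z \<noteq> x \<longrightarrow> z \<noteq> y \<longrightarrow> {x, z} \<notin> E)
     \<or> (\<forall>z. z \<noteq> x \<longrightarrow> z \<noteq> y \<longrightarrow> {y, z} \<notin> E)
     \<or> (\<forall>z. z \<noteq> x \<longrightarrow> z \<noteq> y \<longrightarrow> ({x, z} \<in> E \<longleftrightarrow> {y, z} \<in> E))"

lemma nbr_pairs_mem: "{u, w} \<in> nbr_pairs E v \<longleftrightarrow> u \<noteq> w \<and> {u, v} \<in> E \<and> {w, v} \<in> E"
  unfolding nbr_pairs_def nbrs_def by (auto simp: doubleton_eq_iff)

lemma lc_adj: "{u, w} \<in> local_compl v E \<longleftrightarrow> (({u, w} \<in> E) \<noteq> (u \<noteq> w \<and> {u, v} \<in> E \<and> {w, v} \<in> E))"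
  unfolding local_compl_def using nbr_pairs_mem[of u w E v] by auto

lemma wfg_noloop: "wfg V E \<Longrightarrow> {v, v} \<notin> E"
  unfolding wfg_def by (auto simp: doubleton_eq_iff)

lemma wfg_mem: "wfg V E \<Longrightarrow> {x, y} \<in> E \<Longrightarrow> x \<in> V \<and> y \<in> V \<and> x \<noteq> y"
  unfolding wfg_def by (auto simp: doubleton_eq_iff)

lemma wfg_lc: assumes "wfg V E" shows "wfg V (local_compl v E)"
proof -
  have "\<exists>x y. x \<noteq> y \<and> x \<in> V \<and> y \<in> V \<and> e = {x, y}" if "e \<in> local_compl v E" for e
  proof (cases "e \<in> E")
    case True then show ?thesis using assms unfolding wfg_def by blast
  next
    case False
    then have "e \<in> nbr_pairs E v" using that unfolding local_compl_def by auto
    then obtain x y where "e = {x,y}" "x \<noteq> y" "{x,v} \<in> E" "{y,v} \<in> E"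
      unfolding nbr_pairs_def nbrs_def by auto
    then show ?thesis using wfg_mem[OF assms] by blast
  qed
  then show ?thesis unfolding wfg_def by blast
qed

lemma ext_dbl:
  assumes "\<forall>e\<in>E. \<exists>x y. e = {x, y}" "\<forall>e\<in>F. \<exists>x y. e = {x, y}"
    "\<And>x y. {x, y} \<in> E \<longleftrightarrow> {x, y} \<in> F"
  shows "E = F"
proof (rule set_eqI)
  fix e
  show "e \<in> E \<longleftrightarrow> e \<in> F"
  proof
    assume "e \<in> E"
    then obtain x y where "e = {x,y}" using assms(1) by blast
    then show "e \<in> F" using assms(3) \<open>e \<in> E\<close> by simp
  next
    assume "e \<in> F"
    then obtain x y where "e = {x,y}" using assms(2) by blast
    then show "e \<in> E" using assms(3) \<open>e \<in> F\<close> by simp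
  qed
qed

lemma conn_lc: assumes "wfg V E" "conn V E" "v \<in> V" shows "conn V (local_compl v E)"
  unfolding conn_def
proof (intro allI impI)
  fix X assume X: "X \<subseteq> V" "X \<noteq> {}" "X \<noteq> V"
  then obtain x y where xy: "x \<in> X" "y \<in> V - X" "{x,y} \<in> E" using assms(2) unfolding conn_def by blast
  show "\<exists>x\<in>X. \<exists>y\<in>V - X. {x, y} \<in> local_compl v E"
  proof (cases "{x,y} \<in> local_compl v E")
    case True then show ?thesis using xy by blast
  next
    case False
    then have h: "{x,v} \<in> E" "{y,v} \<in> E" using lc_adj[of x y v E] xy by auto
    have nl: "{v,v} \<notin> E" using wfg_noloop[OF assms(1)] .
    have "{x,v} \<in> local_compl v E" using lc_adj[of x v v E] h nl by auto
    moreover have "{v,y} \<in> local_compl v E" using lc_adj[of v y v E] h nl by (auto simp: insert_commute)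
    ultimately show ?thesis using xy assms(3) by (cases "v \<in> X") auto
  qed
qed

lemma absR3:
  assumes ha: "\<And>z. z \<noteq> x \<Longrightarrow> z \<noteq> y \<Longrightarrow> a' z = (a z \<noteq> (a v \<and> s z))"
    and hb: "\<And>z. z \<noteq> x \<Longrightarrow> z \<noteq> y \<Longrightarrow> b' z = (b z \<noteq> (b v \<and> s z))"
    and "v \<noteq> x" "v \<noteq> y" "\<not> s v"
  shows "((\<forall>z. z \<noteq> x \<longrightarrow> z \<noteq> y \<longrightarrow> \<not> a' z) \<or> (\<forall>z. z \<noteq> x \<longrightarrow> z \<noteq> y \<longrightarrow> \<not> b' z)
     \<or> (\<forall>z. z \<noteq> x \<longrightarrow> z \<noteq> y \<longrightarrow> a' z = b' z)) =
    ((\<forall>z. z \<noteq> x \<longrightarrow> z \<noteq> y \<longrightarrow> \<not> a z) \<or> (\<forall>z. z \<noteq> x \<longrightarrow> z \<noteq> y \<longrightarrow> \<not> b z)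
     \<or> (\<forall>z. z \<noteq> x \<longrightarrow> z \<noteq> y \<longrightarrow> a z = b z))"
proof -
  have av: "a' v = a v" using ha[of v] assms by simp
  have bv: "b' v = b v" using hb[of v] assms by simp
  have 1: "(\<forall>z. z \<noteq> x \<longrightarrow> z \<noteq> y \<longrightarrow> \<not> a' z) = (\<forall>z. z \<noteq> x \<longrightarrow> z \<noteq> y \<longrightarrow> \<not> a z)"
    using ha av assms by metis
  have 2: "(\<forall>z. z \<noteq> x \<longrightarrow> z \<noteq> y \<longrightarrow> \<not> b' z) = (\<forall>z. z \<noteq> x \<longrightarrow> z \<noteq> y \<longrightarrow> \<not> b z)"
    using hb bv assms by metis
  have 3: "(\<forall>z. z \<noteq> x \<longrightarrow> z \<noteq> y \<longrightarrow> a' z = b' z) = (\<forall>z. z \<noteq> x \<longrightarrow> z \<noteq> y \<longrightarrow> a z = b z)"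
  proof
    assume H: "\<forall>z. z \<noteq> x \<longrightarrow> z \<noteq> y \<longrightarrow> a' z = b' z"
    then have "a v = b v" using av bv assms by metis
    then show "\<forall>z. z \<noteq> x \<longrightarrow> z \<noteq> y \<longrightarrow> a z = b z" using H ha hb by metis
  next
    assume H: "\<forall>z. z \<noteq> x \<longrightarrow> z \<noteq> y \<longrightarrow> a z = b z"
    then have "a v = b v" using assms by metis
    then show "\<forall>z. z \<noteq> x \<longrightarrow> z \<noteq> y \<longrightarrow> a' z = b' z" using H ha hb by metis
  qed
  show ?thesis using 1 2 3 by simp
qed

lemma absR1:
  assumes ha: "\<And>z. z \<noteq> x \<Longrightarrow> z \<noteq> y \<Longrightarrow> a' z = a z"
    and hb: "\<And>z. z \<noteq> x \<Longrightarrow> z \<noteq> y \<Longrightarrow> b' z = (b z \<noteq> (c \<and> a z))"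
  shows "((\<forall>z. z \<noteq> x \<longrightarrow> z \<noteq> y \<longrightarrow> \<not> a' z) \<or> (\<forall>z. z \<noteq> x \<longrightarrow> z \<noteq> y \<longrightarrow> \<not> b' z)
     \<or> (\<forall>z. z \<noteq> x \<longrightarrow> z \<noteq> y \<longrightarrow> a' z = b' z)) =
    ((\<forall>z. z \<noteq> x \<longrightarrow> z \<noteq> y \<longrightarrow> \<not> a z) \<or> (\<forall>z. z \<noteq> x \<longrightarrow> z \<noteq> y \<longrightarrow> \<not> b z)
     \<or> (\<forall>z. z \<noteq> x \<longrightarrow> z \<noteq> y \<longrightarrow> a z = b z))"
proof (cases c)
  case True
  then show ?thesis using ha hb by (metis (no_types, opaque_lifting))
next
  case False
  then show ?thesis using ha hb by (metis (no_types, opaque_lifting))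
qed

lemma Rel_sym: "Rel E x y = Rel E y x"
  unfolding Rel_def by blast

lemma Rel_lc:
  assumes nl: "\<And>w. {w, w} \<notin> E" and "x \<noteq> y"
  shows "Rel (local_compl v E) x y \<longleftrightarrow> Rel E x y"
proof -
  have L: "\<And>u w. {u, w} \<in> local_compl v E \<longleftrightarrow> (({u, w} \<in> E) \<noteq> (u \<noteq> w \<and> {u, v} \<in> E \<and> {w, v} \<in> E))"
    by (rule lc_adj)
  have C: "\<And>u w. {u,w} = {w,u}" by (rule insert_commute)
  consider "v = x" | "v = y" | "v \<noteq> x" "v \<noteq> y" by blast
  then show ?thesis
  proof cases
    case 1
    show ?thesis unfolding Rel_def
      apply (rule absR1[where c = "{y,x} \<in> E"])
      subgoal for z using L[of x z] nl[of x] 1 by simp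
      subgoal for z using L[of y z] C[of z x] 1 by simp
      done
  next
    case 2
    have "Rel (local_compl v E) y x \<longleftrightarrow> Rel E y x" unfolding Rel_def
      apply (rule absR1[where c = "{x,y} \<in> E"])
      subgoal for z using L[of y z] nl[of y] 2 by simp
      subgoal for z using L[of x z] C[of z y] 2 by simp
      done
    then show ?thesis using Rel_sym by metis
  next
    case 3
    show ?thesis unfolding Rel_def
      apply (rule absR3[where v = v and s = "\<lambda>z. {z,v} \<in> E"])
      subgoal for z using L[of x z] C[of v x] by simp
      subgoal for z using L[of y z] C[of v y] by simp
      using 3 nl by auto
  qed
qed



lemma label_exists:
  assumes "finite E" "\<forall>e\<in>E. \<exists>x y. x \<in> V \<and> y \<in> V \<and> e = {x, y}" "finite V"
  shows "\<exists>f::'a \<Rightarrow> 'a. (\<forall>x y. {x, y} \<in> E \<longrightarrow> f x = f y) \<and> card V \<le> card E + card (f ` V)"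
  using assms(1,2)
proof (induction E rule: finite_induct)
  case empty
  show ?case by (rule exI[of _ id]) simp
next
  case (insert e F)
  have "\<forall>e\<in>F. \<exists>x y. x \<in> V \<and> y \<in> V \<and> e = {x, y}" using insert.prems by simp
  from insert.IH[OF this] obtain f :: "'a \<Rightarrow> 'a" where f: "\<forall>x y. {x, y} \<in> F \<longrightarrow> f x = f y" "card V \<le> card F + card (f ` V)"
    by (elim exE conjE)
  obtain p q where pq: "p \<in> V" "q \<in> V" "e = {p, q}" using insert.prems by (meson insertI1)
  have cI: "card (insert e F) = Suc (card F)" using insert.hyps by simp
  have split: "P x y" if H: "{x, y} \<in> insert e F" "\<And>x y. {x,y} \<in> F \<Longrightarrow> P x y"
    "P p q" "P q p" for P x y
  proof -
    consider "{x,y} = {p,q}" | "{x,y} \<in> F" using H(1) pq(3) by blast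
    then show ?thesis
    proof cases
      case 1
      then have "(x = p \<and> y = q) \<or> (x = q \<and> y = p)" by (simp add: doubleton_eq_iff)
      then show ?thesis using H by blast
    next
      case 2 then show ?thesis using H by blast
    qed
  qed
  show ?case
  proof (cases "f p = f q")
    case True
    have "\<forall>x y. {x, y} \<in> insert e F \<longrightarrow> f x = f y"
    proof (intro allI impI)
      fix x y assume "{x, y} \<in> insert e F"
      then show "f x = f y" by (rule split[where P = "\<lambda>x y. f x = f y"]) (use f(1) True in auto)
    qed
    then show ?thesis using f(2) cI by (intro exI[of _ f]) simp
  next
    case False
    define g where "g = (\<lambda>z. if f z = f q then f p else f z)"
    have gV: "g ` V = f ` V - {f q}"
    proof
      show "g ` V \<subseteq> f ` V - {f q}"
      proof
        fix c assume "c \<in> g ` V"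
        then obtain z where z: "z \<in> V" "c = g z" by blast
        show "c \<in> f ` V - {f q}"
        proof (cases "f z = f q")
          case True then show ?thesis using z pq False unfolding g_def by simp
        next
          case False then show ?thesis using z unfolding g_def by simp
        qed
      qed
    next
      show "f ` V - {f q} \<subseteq> g ` V"
      proof
        fix c assume "c \<in> f ` V - {f q}"
        then obtain z where z: "z \<in> V" "c = f z" "f z \<noteq> f q" by blast
        then have "g z = c" unfolding g_def by simp
        then show "c \<in> g ` V" using z(1) by blast
      qed
    qed
    have "f q \<in> f ` V" using pq by simp
    then have cg: "card (f ` V) = Suc (card (g ` V))"
      using gV assms(3) by (metis card_Suc_Diff1 finite_imageI)
    have "\<forall>x y. {x, y} \<in> insert e F \<longrightarrow> g x = g y"
    proof (intro allI impI)
      fix x y assume "{x, y} \<in> insert e F"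
      then show "g x = g y" by (rule split[where P = "\<lambda>x y. g x = g y"])
         (use f(1) False in \<open>auto simp: g_def\<close>)
    qed
    then show ?thesis using f(2) cI cg by (intro exI[of _ g]) simp
  qed
qed

lemma wfg_Pow: "wfg V E \<Longrightarrow> E \<subseteq> Pow V"
  unfolding wfg_def by auto

lemma wfg_finite: "finite V \<Longrightarrow> wfg V E \<Longrightarrow> finite E"
  using wfg_Pow by (metis finite_Pow_iff finite_subset)

lemma conn_card:
  assumes "finite V" "V \<noteq> {}" "wfg V E" "conn V E"
  shows "card V \<le> card E + 1"
proof -
  have "\<forall>e\<in>E. \<exists>x y. x \<in> V \<and> y \<in> V \<and> e = {x, y}" using assms(3) unfolding wfg_def by blast
  from label_exists[OF wfg_finite[OF assms(1,3)] this assms(1)]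
  obtain f :: "'a \<Rightarrow> 'a" where f: "\<forall>x y. {x, y} \<in> E \<longrightarrow> f x = f y" "card V \<le> card E + card (f ` V)"
    by (elim exE conjE)
  obtain v0 where v0: "v0 \<in> V" using assms(2) by auto
  define X where "X = {x \<in> V. f x = f v0}"
  have "X = V"
  proof (rule ccontr)
    assume "X \<noteq> V"
    moreover have "X \<subseteq> V" "X \<noteq> {}" using v0 unfolding X_def by auto
    ultimately obtain x y where "x \<in> X" "y \<in> V - X" "{x,y} \<in> E" using assms(4) unfolding conn_def by blast
    then show False using f(1) unfolding X_def by auto
  qed
  then have "f ` V = {f v0}" unfolding X_def using v0 by auto
  then show ?thesis using f(2) by simp
qed

lemma kb_adj: "{x, z} \<in> complete_bipartite A B \<longleftrightarrow> (x \<in> A \<and> z \<in> B) \<or> (x \<in> B \<and> z \<in> A)"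
  unfolding complete_bipartite_def by (auto simp: doubleton_eq_iff)

lemma kb_wfg: assumes "A \<inter> B = {}" shows "wfg (A \<union> B) (complete_bipartite A B)"
  unfolding wfg_def
proof
  fix e assume "e \<in> complete_bipartite A B"
  then obtain x y where "e = {x,y}" "x \<in> A" "y \<in> B" unfolding complete_bipartite_def by blast
  then show "\<exists>x y. x \<noteq> y \<and> x \<in> A \<union> B \<and> y \<in> A \<union> B \<and> e = {x, y}"
    using assms by (intro exI[of _ x] exI[of _ y]) auto
qed

lemma two_elem: "finite S \<Longrightarrow> 2 \<le> card S \<Longrightarrow> \<exists>z\<in>S. z \<noteq> y"
proof (rule ccontr)
  assume "finite S" "2 \<le> card S" "\<not> (\<exists>z\<in>S. z \<noteq> y)"
  then have "S \<subseteq> {y}" by auto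
  then have "card S \<le> card {y}" by (intro card_mono) auto
  then have "card S \<le> 1" by simp
  then show False using \<open>2 \<le> card S\<close> by simp
qed

lemma kb_conn:
  assumes "A \<inter> B = {}" "A \<noteq> {}" "B \<noteq> {}"
  shows "conn (A \<union> B) (complete_bipartite A B)"
  unfolding conn_def
proof (intro allI impI)
  fix X assume X: "X \<subseteq> A \<union> B" "X \<noteq> {}" "X \<noteq> A \<union> B"
  show "\<exists>x\<in>X. \<exists>y\<in>A \<union> B - X. {x, y} \<in> complete_bipartite A B"
  proof (cases "X \<inter> A = {}")
    case True
    then obtain b where "b \<in> X" "b \<in> B" using X by auto
    moreover obtain a where "a \<in> A" using assms by auto
    ultimately show ?thesis using True by (auto simp: kb_adj)
  next
    case False
    then obtain a where a: "a \<in> X" "a \<in> A" by auto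
    show ?thesis
    proof (cases "B \<subseteq> X")
      case True
      then obtain a' where "a' \<in> A" "a' \<notin> X" using X by auto
      moreover obtain b where "b \<in> B" using assms by auto
      ultimately show ?thesis using True by (auto simp: kb_adj)
    next
      case False
      then obtain b where "b \<in> B" "b \<notin> X" by auto
      then show ?thesis using a by (auto simp: kb_adj)
    qed
  qed
qed

lemma kb_Rel:
  assumes "A \<inter> B = {}" "finite A" "finite B" "2 \<le> card A" "2 \<le> card B"
    "x \<in> A \<union> B" "y \<in> A \<union> B" "x \<noteq> y"
  shows "Rel (complete_bipartite A B) x y \<longleftrightarrow> (x \<in> A \<longleftrightarrow> y \<in> A)"
proof (cases "x \<in> A \<longleftrightarrow> y \<in> A")
  case True
  then have "\<forall>z. z \<noteq> x \<longrightarrow> z \<noteq> y \<longrightarrow> ({x, z} \<in> complete_bipartite A B \<longleftrightarrow> {y, z} \<in> complete_bipartite A B)"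
    using assms by (auto simp: kb_adj)
  then show ?thesis using True unfolding Rel_def by blast
next
  case False
  have key: "\<not> Rel (complete_bipartite A B) x y" if "x \<in> A" "y \<in> B" "x \<noteq> y" for x y
  proof -
    obtain b where b: "b \<in> B" "b \<noteq> y" using two_elem[OF assms(3) assms(5)] by blast
    obtain a where a: "a \<in> A" "a \<noteq> x" using two_elem[OF assms(2) assms(4)] by blast
    have bx: "b \<noteq> x" using b that assms(1) by blast
    have ay: "a \<noteq> y" using a that assms(1) by blast
    have e1: "{x, b} \<in> complete_bipartite A B" using that b by (simp add: kb_adj)
    have e2: "{y, a} \<in> complete_bipartite A B" using that a by (simp add: kb_adj)
    have e3: "{y, b} \<notin> complete_bipartite A B" using that b assms(1) by (auto simp add: kb_adj)
    show ?thesis unfolding Rel_def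
      using e1 e2 e3 bx ay a(2) b(2) by metis
  qed
  show ?thesis
  proof (cases "x \<in> A")
    case True
    then have "y \<in> B" using False assms by auto
    then show ?thesis using key[of x y] True False assms by auto
  next
    case f2: False
    then have "y \<in> A" "x \<in> B" using False assms by auto
    then show ?thesis using key[of y x] Rel_sym False assms by metis
  qed
qed

lemma orbit_inv:
  assumes "H \<in> lc_orbit V E0" "wfg V E0" "conn V E0"
  shows "wfg V H \<and> conn V H \<and> (\<forall>x y. x \<noteq> y \<longrightarrow> Rel H x y = Rel E0 x y)"
  using assms(1)
proof (induction rule: lc_orbit.induct)
  case base
  then show ?case using assms by simp
next
  case (step E v)
  have w: "wfg V E" using step.IH by (rule conjunct1)
  have c: "conn V E" using step.IH by (blast dest: conjunct2 conjunct1)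
  have r: "\<forall>x y. x \<noteq> y \<longrightarrow> Rel E x y = Rel E0 x y" using step.IH by (blast dest: conjunct2)
  have nl: "\<And>w. {w, w} \<notin> E" by (rule wfg_noloop[OF w])
  show ?case
  proof (intro conjI allI impI)
    show "wfg V (local_compl v E)" by (rule wfg_lc[OF w])
    show "conn V (local_compl v E)" by (rule conn_lc[OF w c step.hyps(2)])
    fix x y :: 'a assume "x \<noteq> y"
    then show "Rel (local_compl v E) x y = Rel E0 x y" using Rel_lc[OF nl, of x y v] r by simp
  qed
qed



definition bsE :: "'a \<Rightarrow> 'a \<Rightarrow> 'a set \<Rightarrow> 'a set \<Rightarrow> 'a set set" where
  "bsE a b S V = insert {a, b} ({{a, x} | x. x \<in> S} \<union> {{b, x} | x. x \<in> V - {a, b} - S})"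

lemma binary_star_bsE: "binary_star V E \<longleftrightarrow> (\<exists>a b S. a \<in> V \<and> b \<in> V \<and> a \<noteq> b \<and> S \<subseteq> V - {a, b} \<and> E = bsE a b S V)"
  unfolding binary_star_def bsE_def by simp

lemma bs_adj: "{u, w} \<in> bsE a b S V \<longleftrightarrow> ({u, w} = {a, b} \<or> (u = a \<and> w \<in> S) \<or> (w = a \<and> u \<in> S)
   \<or> (u = b \<and> w \<in> V - {a, b} - S) \<or> (w = b \<and> u \<in> V - {a, b} - S))"
  unfolding bsE_def by (auto simp: doubleton_eq_iff)

lemma bs_wfg:
  assumes "a \<in> V" "b \<in> V" "a \<noteq> b" "S \<subseteq> V - {a, b}"
  shows "wfg V (bsE a b S V)"
  unfolding wfg_def
proof
  fix e assume "e \<in> bsE a b S V"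
  then have "e = {a, b} \<or> (\<exists>x\<in>S. e = {a, x}) \<or> (\<exists>x\<in>V - {a, b} - S. e = {b, x})"
    unfolding bsE_def by blast
  then consider "e = {a, b}" | x where "x \<in> S" "e = {a, x}" | x where "x \<in> V - {a, b} - S" "e = {b, x}"
    by (elim disjE bexE) auto
  then show "\<exists>x y. x \<noteq> y \<and> x \<in> V \<and> y \<in> V \<and> e = {x, y}"
  proof cases
    case 1 then show ?thesis using assms by blast
  next
    case (2 x) then show ?thesis using assms by (intro exI[of _ a] exI[of _ x]) auto
  next
    case (3 x) then show ?thesis using assms by (intro exI[of _ b] exI[of _ x]) auto
  qed
qed

lemma bs_card:
  assumes "finite V" "a \<in> V" "b \<in> V" "a \<noteq> b" "S \<subseteq> V - {a, b}"
  shows "card (bsE a b S V) = card V - 1"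
proof -
  define T where "T = V - {a, b} - S"
  have I1: "{{a, x} | x. x \<in> S} = (\<lambda>x. {a, x}) ` S" by blast
  have I2: "{{b, x} | x. x \<in> V - {a, b} - S} = (\<lambda>x. {b, x}) ` T" unfolding T_def by blast
  have fS: "finite S" using assms(1,5) finite_subset by blast
  have fT: "finite T" unfolding T_def using assms(1) by simp
  have inj1: "inj_on (\<lambda>x. {a, x}) S" by (rule inj_onI) (auto simp: doubleton_eq_iff)
  have inj2: "inj_on (\<lambda>x. {b, x}) T" by (rule inj_onI) (auto simp: doubleton_eq_iff)
  have disj: "(\<lambda>x. {a, x}) ` S \<inter> (\<lambda>x. {b, x}) ` T = {}"
  proof (rule ccontr)
    assume "(\<lambda>x. {a, x}) ` S \<inter> (\<lambda>x. {b, x}) ` T \<noteq> {}"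
    then obtain x y where "x \<in> S" "y \<in> T" "{a, x} = {b, y}" by blast
    then show False using assms(4) unfolding T_def by (auto simp: doubleton_eq_iff)
  qed
  have nin: "{a, b} \<notin> (\<lambda>x. {a, x}) ` S \<union> (\<lambda>x. {b, x}) ` T"
  proof
    assume "{a, b} \<in> (\<lambda>x. {a, x}) ` S \<union> (\<lambda>x. {b, x}) ` T"
    then have "(\<exists>x\<in>S. {a, b} = {a, x}) \<or> (\<exists>x\<in>T. {a, b} = {b, x})" by blast
    then consider x where "x \<in> S" "{a, b} = {a, x}" | x where "x \<in> T" "{a, b} = {b, x}" by (elim disjE bexE) auto
    then show False
    proof cases
      case (1 x) then show False using assms(5) by (auto simp: doubleton_eq_iff)
    next
      case (2 x) then show False unfolding T_def by (auto simp: doubleton_eq_iff)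
    qed
  qed
  have c1: "card ((\<lambda>x. {a, x}) ` S) = card S" using inj1 by (rule card_image)
  have c2: "card ((\<lambda>x. {b, x}) ` T) = card T" using inj2 by (rule card_image)
  have cu: "card ((\<lambda>x. {a, x}) ` S \<union> (\<lambda>x. {b, x}) ` T) = card S + card T"
    using card_Un_disjoint[OF finite_imageI[OF fS] finite_imageI[OF fT] disj] c1 c2 by simp
  have "card (bsE a b S V) = Suc (card S + card T)"
    unfolding bsE_def I1 I2 using nin cu fS fT by simp
  moreover have "card T = card (V - {a, b}) - card S"
    unfolding T_def using card_Diff_subset[OF fS assms(5)] by simp
  moreover have "card (V - {a, b}) = card V - 2"
    using card_Diff_subset[of "{a,b}" V] assms by simp
  moreover have "card S \<le> card (V - {a, b})" using card_mono assms fS by (metis finite_Diff)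
  moreover have "2 \<le> card V"
  proof -
    have "card {a, b} \<le> card V" using assms by (intro card_mono) auto
    then show ?thesis using assms(4) by simp
  qed
  ultimately show ?thesis by linarith
qed


lemma G3_bs:
  assumes "A \<inter> B = {}" "a \<in> A" "b \<in> B"
  shows "local_compl a (local_compl b (local_compl a (complete_bipartite A B))) = bsE a b (A - {a}) (A \<union> B)"
proof -
  define K where "K = complete_bipartite A B"
  define G1 where "G1 = local_compl a K"
  define G2 where "G2 = local_compl b G1"
  define G3 where "G3 = local_compl a G2"
  have k: "\<And>u w. {u, w} \<in> K \<longleftrightarrow> (u \<in> A \<and> w \<in> B) \<or> (u \<in> B \<and> w \<in> A)"
    unfolding K_def by (rule kb_adj)
  have g1: "\<And>u w. {u, w} \<in> G1 \<longleftrightarrow> u \<noteq> w \<and> ((u \<in> A \<and> w \<in> B) \<or> (u \<in> B \<and> w \<in> A) \<or> (u \<in> B \<and> w \<in> B))"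
    unfolding G1_def lc_adj k using assms by auto
  have g2: "\<And>u w. {u, w} \<in> G2 \<longleftrightarrow> u \<noteq> w \<and> ((u = b \<and> w \<in> A \<union> B) \<or> (w = b \<and> u \<in> A \<union> B) \<or> (u \<in> A \<and> w \<in> A))"
    unfolding G2_def lc_adj g1 using assms by auto
  have g3: "\<And>u w. {u, w} \<in> G3 \<longleftrightarrow> u \<noteq> w \<and> ((u = a \<and> w \<in> A) \<or> (w = a \<and> u \<in> A)
      \<or> (u = b \<and> (w \<in> B \<or> w = a)) \<or> (w = b \<and> (u \<in> B \<or> u = a)))"
    unfolding G3_def lc_adj g2 using assms by auto
  have V: "a \<in> A \<union> B" "b \<in> A \<union> B" "a \<noteq> b" "A - {a} \<subseteq> A \<union> B - {a, b}" using assms by auto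
  have w3: "wfg (A \<union> B) G3" unfolding G3_def G2_def G1_def K_def
    by (intro wfg_lc kb_wfg assms(1))
  have wb: "wfg (A \<union> B) (bsE a b (A - {a}) (A \<union> B))" by (rule bs_wfg[OF V])
  have "G3 = bsE a b (A - {a}) (A \<union> B)"
  proof (rule ext_dbl)
    show "\<forall>e\<in>G3. \<exists>x y. e = {x, y}" using w3 unfolding wfg_def by blast
    show "\<forall>e\<in>bsE a b (A - {a}) (A \<union> B). \<exists>x y. e = {x, y}" using wb unfolding wfg_def by blast
    fix x y
    show "{x, y} \<in> G3 \<longleftrightarrow> {x, y} \<in> bsE a b (A - {a}) (A \<union> B)"
      unfolding g3 bs_adj using assms by (auto simp: doubleton_eq_iff)
  qed
  then show ?thesis unfolding G3_def G2_def G1_def K_def .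
qed


lemma conn_remove:
  assumes "conn V E"
    and h1: "\<And>X. X \<subseteq> V \<Longrightarrow> p \<in> X \<Longrightarrow> q \<notin> X \<Longrightarrow> \<exists>x\<in>X. \<exists>y\<in>V - X. {x, y} \<in> E \<and> {x, y} \<noteq> {p, q}"
    and h2: "\<And>X. X \<subseteq> V \<Longrightarrow> q \<in> X \<Longrightarrow> p \<notin> X \<Longrightarrow> \<exists>x\<in>X. \<exists>y\<in>V - X. {x, y} \<in> E \<and> {x, y} \<noteq> {p, q}"
  shows "conn V (E - {{p, q}})"
  unfolding conn_def
proof (intro allI impI)
  fix X assume X: "X \<subseteq> V" "X \<noteq> {}" "X \<noteq> V"
  then obtain x y where xy: "x \<in> X" "y \<in> V - X" "{x, y} \<in> E" using assms(1) unfolding conn_def by blast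
  show "\<exists>x\<in>X. \<exists>y\<in>V - X. {x, y} \<in> E - {{p, q}}"
  proof (cases "{x, y} = {p, q}")
    case False then show ?thesis using xy by blast
  next
    case True
    then have "(x = p \<and> y = q) \<or> (x = q \<and> y = p)" by (simp add: doubleton_eq_iff)
    then show ?thesis
    proof
      assume "x = p \<and> y = q"
      then obtain x' y' where "x' \<in> X" "y' \<in> V - X" "{x', y'} \<in> E" "{x', y'} \<noteq> {p, q}"
        using h1[OF X(1)] xy by blast
      then show ?thesis by blast
    next
      assume "x = q \<and> y = p"
      then obtain x' y' where "x' \<in> X" "y' \<in> V - X" "{x', y'} \<in> E" "{x', y'} \<noteq> {p, q}"
        using h2[OF X(1)] xy by blast
      then show ?thesis by blast
    qed
  qed
qed

lemma tri_remove:
  assumes w: "wfg V E" and c: "conn V E" and e: "{p, q} \<in> E" "{q, r} \<in> E" "{r, p} \<in> E"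
  shows "conn V (E - {{p, q}})"
proof -
  have m: "p \<in> V" "q \<in> V" "r \<in> V" "p \<noteq> q" "q \<noteq> r" "r \<noteq> p"
    using wfg_mem[OF w e(1)] wfg_mem[OF w e(2)] wfg_mem[OF w e(3)] by auto
  have e': "{r, q} \<in> E" "{p, r} \<in> E" using e by (simp_all add: insert_commute)
  have n1: "{r, q} \<noteq> {p, q}" "{p, r} \<noteq> {p, q}" "{r, p} \<noteq> {p, q}" "{q, r} \<noteq> {p, q}"
    using m by (auto simp: doubleton_eq_iff)
  show ?thesis
  proof (rule conn_remove[OF c])
    fix X assume "X \<subseteq> V" "p \<in> X" "q \<notin> X"
    then show "\<exists>x\<in>X. \<exists>y\<in>V - X. {x, y} \<in> E \<and> {x, y} \<noteq> {p, q}"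
      using e e' n1 m by (cases "r \<in> X") blast+
  next
    fix X assume "X \<subseteq> V" "q \<in> X" "p \<notin> X"
    then show "\<exists>x\<in>X. \<exists>y\<in>V - X. {x, y} \<in> E \<and> {x, y} \<noteq> {p, q}"
      using e e' n1 m by (cases "r \<in> X") blast+
  qed
qed

lemma wit: "x \<in> X \<Longrightarrow> y \<in> V \<Longrightarrow> y \<notin> X \<Longrightarrow> {x, y} \<in> E \<Longrightarrow> {x, y} \<noteq> {p, q} \<Longrightarrow>
  \<exists>x\<in>X. \<exists>y\<in>V - X. {x, y} \<in> E \<and> {x, y} \<noteq> {p, q}"
  by blast

lemma c4_remove:
  assumes w: "wfg V E" and c: "conn V E" and e: "{p, q} \<in> E" "{q, r} \<in> E" "{r, s} \<in> E" "{s, p} \<in> E"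
    and d: "p \<noteq> r" "q \<noteq> s"
  shows "conn V (E - {{p, q}})"
proof -
  have m: "p \<in> V" "q \<in> V" "r \<in> V" "s \<in> V" "p \<noteq> q" "q \<noteq> r" "r \<noteq> s" "s \<noteq> p"
    using wfg_mem[OF w e(1)] wfg_mem[OF w e(2)] wfg_mem[OF w e(3)] wfg_mem[OF w e(4)] by auto
  have e': "{r, q} \<in> E" "{p, s} \<in> E" "{s, r} \<in> E" using e by (simp_all add: insert_commute)
  have n1: "{r, q} \<noteq> {p, q}" "{p, s} \<noteq> {p, q}" "{s, r} \<noteq> {p, q}" "{q, r} \<noteq> {p, q}"
     "{s, p} \<noteq> {p, q}" "{r, s} \<noteq> {p, q}"
    using m d by (auto simp: doubleton_eq_iff)
  show ?thesis
  proof (rule conn_remove[OF c])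
    fix X assume X: "X \<subseteq> V" "p \<in> X" "q \<notin> X"
    show "\<exists>x\<in>X. \<exists>y\<in>V - X. {x, y} \<in> E \<and> {x, y} \<noteq> {p, q}"
    proof (cases "s \<in> X")
      case False then show ?thesis using wit[of p X s V E p q] X e' n1 m by blast
    next
      case True
      show ?thesis
      proof (cases "r \<in> X")
        case True then show ?thesis using wit[of r X q V E p q] X e' n1 m by blast
      next
        case False then show ?thesis using wit[of s X r V E p q] X e' n1 m \<open>s \<in> X\<close> by blast
      qed
    qed
  next
    fix X assume X: "X \<subseteq> V" "q \<in> X" "p \<notin> X"
    show "\<exists>x\<in>X. \<exists>y\<in>V - X. {x, y} \<in> E \<and> {x, y} \<noteq> {p, q}"
    proof (cases "s \<in> X")
      case True then show ?thesis using wit[of s X p V E p q] X e n1 m by blast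
    next
      case False
      show ?thesis
      proof (cases "r \<in> X")
        case True then show ?thesis using wit[of r X s V E p q] X e n1 m \<open>s \<notin> X\<close> by blast
      next
        case False then show ?thesis using wit[of q X r V E p q] X e n1 m by blast
      qed
    qed
  qed
qed

lemma remove_contra:
  assumes "finite V" "V \<noteq> {}" "wfg V E" "card E + 1 \<le> card V" "{p, q} \<in> E"
    "conn V (E - {{p, q}})"
  shows False
proof -
  have "wfg V (E - {{p, q}})" using assms(3) unfolding wfg_def by blast
  then have "card V \<le> card (E - {{p, q}}) + 1" using conn_card assms by blast
  moreover have "card (E - {{p, q}}) = card E - 1" using assms wfg_finite by simp
  moreover have "card E \<ge> 1" using assms wfg_finite by (metis card_0_eq empty_iff less_one not_le)
  ultimately show False using assms(4) by linarith
qed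



definition leafat :: "'a set set \<Rightarrow> 'a \<Rightarrow> 'a \<Rightarrow> bool" where
  "leafat E x y \<longleftrightarrow> (\<forall>z. {x, z} \<in> E \<longleftrightarrow> z = y)"

lemma rel_case1:
  assumes nl: "\<And>t. {t, t} \<notin> E" and z0: "{x, z0} \<in> E"
    and H: "\<forall>z. z \<noteq> x \<longrightarrow> z \<noteq> y \<longrightarrow> {x, z} \<notin> E"
  shows "leafat E x y"
proof -
  have "z0 \<noteq> x" using nl z0 by metis
  then have "z0 = y" using H z0 by blast
  then have xy: "{x, y} \<in> E" using z0 by simp
  show ?thesis unfolding leafat_def
  proof (intro allI iffI)
    fix z assume "{x, z} \<in> E"
    moreover have "z \<noteq> x \<or> {x, z} \<notin> E" using nl by metis
    ultimately show "z = y" using H by blast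
  next
    fix z assume "z = y" then show "{x, z} \<in> E" using xy by simp
  qed
qed

lemma rel_leaf:
  assumes nl: "\<And>t. {t, t} \<notin> E"
    and noiso: "\<And>x. x \<in> V \<Longrightarrow> \<exists>z. {x, z} \<in> E"
    and notri: "\<And>p q r. {p, q} \<in> E \<Longrightarrow> {q, r} \<in> E \<Longrightarrow> {r, p} \<in> E \<Longrightarrow> False"
    and noc4: "\<And>p q r s. {p, q} \<in> E \<Longrightarrow> {q, r} \<in> E \<Longrightarrow> {r, s} \<in> E \<Longrightarrow> {s, p} \<in> E \<Longrightarrow> p \<noteq> r \<Longrightarrow> q \<noteq> s \<Longrightarrow> False"
    and xV: "x \<in> V" and yV: "y \<in> V" and xy: "x \<noteq> y" and R: "Rel E x y"
  shows "leafat E x y \<or> leafat E y x \<or> (\<exists>z. leafat E x z \<and> leafat E y z)"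
proof -
  have C: "\<And>u w. {u,w} = {w,u}" by (rule insert_commute)
  obtain zx where zx: "{x, zx} \<in> E" using noiso xV by blast
  obtain zy where zy: "{y, zy} \<in> E" using noiso yV by blast
  consider (c1) "\<forall>z. z \<noteq> x \<longrightarrow> z \<noteq> y \<longrightarrow> {x, z} \<notin> E"
    | (c2) "\<forall>z. z \<noteq> x \<longrightarrow> z \<noteq> y \<longrightarrow> {y, z} \<notin> E"
    | (c3) "\<forall>z. z \<noteq> x \<longrightarrow> z \<noteq> y \<longrightarrow> ({x, z} \<in> E \<longleftrightarrow> {y, z} \<in> E)"
    using R unfolding Rel_def by blast
  then show ?thesis
  proof cases
    case c1 then show ?thesis using rel_case1[OF nl zx] by blast
  next
    case c2
    then have "\<forall>z. z \<noteq> y \<longrightarrow> z \<noteq> x \<longrightarrow> {y, z} \<notin> E" by blast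
    then show ?thesis using rel_case1[OF nl zy] by blast
  next
    case c3
    show ?thesis
    proof (cases "{x, y} \<in> E")
      case True
      have "leafat E x y" unfolding leafat_def
      proof (intro allI iffI)
        fix z assume z: "{x, z} \<in> E"
        show "z = y"
        proof (rule ccontr)
          assume "z \<noteq> y"
          moreover have "z \<noteq> x" using nl z by metis
          ultimately have "{y, z} \<in> E" using c3 z by blast
          moreover have "{z, x} \<in> E" using z C by metis
          ultimately show False using notri[OF True] by blast
        qed
      next
        fix z assume "z = y" then show "{x, z} \<in> E" using True by simp
      qed
      then show ?thesis by blast
    next
      case False
      have zx1: "zx \<noteq> x" using nl zx by metis
      have zx2: "zx \<noteq> y" using False zx by metis
      have yzx: "{y, zx} \<in> E" using c3 zx zx1 zx2 by blast
      have lx: "leafat E x zx" unfolding leafat_def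
      proof (intro allI iffI)
        fix t assume t: "{x, t} \<in> E"
        show "t = zx"
        proof (rule ccontr)
          assume tz: "t \<noteq> zx"
          have "t \<noteq> x" using nl t by metis
          moreover have "t \<noteq> y" using False t by metis
          ultimately have "{y, t} \<in> E" using c3 t by blast
          moreover have "{zx, y} \<in> E" using yzx C by metis
          moreover have "{t, x} \<in> E" using t C by metis
          ultimately show False using noc4[OF zx] xy tz by metis
        qed
      next
        fix t assume "t = zx" then show "{x, t} \<in> E" using zx by simp
      qed
      have "leafat E y zx" unfolding leafat_def
      proof (intro allI iffI)
        fix t assume t: "{y, t} \<in> E"
        have "t \<noteq> y" using nl t by metis
        moreover have "t \<noteq> x" using False t C by metis
        ultimately have "{x, t} \<in> E" using c3 t by blast
        then show "t = zx" using lx unfolding leafat_def by blast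
      next
        fix t assume "t = zx" then show "{y, t} \<in> E" using yzx by simp
      qed
      then show ?thesis using lx by blast
    qed
  qed
qed



lemma tree_bs:
  assumes fin: "finite V" and VAB: "V = A \<union> B" and dj: "A \<inter> B = {}"
    and cA: "2 \<le> card A" and cB: "2 \<le> card B"
    and w: "wfg V E" and c: "conn V E"
    and notri: "\<And>p q r. {p, q} \<in> E \<Longrightarrow> {q, r} \<in> E \<Longrightarrow> {r, p} \<in> E \<Longrightarrow> False"
    and noc4: "\<And>p q r s. {p, q} \<in> E \<Longrightarrow> {q, r} \<in> E \<Longrightarrow> {r, s} \<in> E \<Longrightarrow> {s, p} \<in> E \<Longrightarrow> p \<noteq> r \<Longrightarrow> q \<noteq> s \<Longrightarrow> False"
    and rel: "\<And>x y. x \<in> V \<Longrightarrow> y \<in> V \<Longrightarrow> x \<noteq> y \<Longrightarrow> Rel E x y = (x \<in> A \<longleftrightarrow> y \<in> A)"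
  shows "binary_star V E"
proof -
  have C: "\<And>u w. {u,w} = {w,u}" by (rule insert_commute)
  have fA: "finite A" and fB: "finite B" using fin VAB by auto
  have cV: "card V = card A + card B" using VAB card_Un_disjoint[OF fA fB dj] by simp
  have nl: "\<And>t. {t, t} \<notin> E" by (rule wfg_noloop[OF w])
  have mem: "\<And>x y. {x, y} \<in> E \<Longrightarrow> x \<in> V \<and> y \<in> V \<and> x \<noteq> y" by (rule wfg_mem[OF w])
  have small: "X \<noteq> V" if "X \<subseteq> {x, y}" for X x y
  proof
    assume "X = V"
    then have "card V \<le> card {x, y}" using that by (intro card_mono) auto
    also have "\<dots> \<le> 2" by (simp add: card_insert_le_m1)
    finally show False using cV cA cB by linarith
  qed
  have noiso: "\<exists>z. {x, z} \<in> E" if xV: "x \<in> V" for x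
  proof -
    have "{x} \<noteq> V" using small[of "{x}" x x] by simp
    then obtain x' y where "x' \<in> {x}" "y \<in> V - {x}" "{x', y} \<in> E"
      using c xV unfolding conn_def by blast
    then show ?thesis by blast
  qed
  have RL: "leafat E x y \<or> leafat E y x \<or> (\<exists>z. leafat E x z \<and> leafat E y z)"
    if "x \<in> V" "y \<in> V" "x \<noteq> y" "Rel E x y" for x y
    using rel_leaf[of E V, OF nl noiso notri noc4 that] .
  have ledge: "{x, y} \<in> E" "{y, x} \<in> E" if "leafat E x y" for x y
    using that unfolding leafat_def by (auto simp: C)
  have luniq: "z = y" if "leafat E x y" "{x, z} \<in> E" for x y z
    using that unfolding leafat_def by blast
  have two_leaf: False if "x \<in> V" "y \<in> V" "leafat E x y" "leafat E y x" for x y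
  proof -
    have "{x, y} \<noteq> V" using small by blast
    moreover have "{x, y} \<subseteq> V" "{x, y} \<noteq> {}" using that by auto
    ultimately have "\<exists>x'\<in>{x, y}. \<exists>y'\<in>V - {x, y}. {x', y'} \<in> E"
      using c[unfolded conn_def, rule_format, of "{x, y}"] by blast
    then obtain x' y' where xy': "x' \<in> {x, y}" "y' \<in> V - {x, y}" "{x', y'} \<in> E"
      by blast
    show False
    proof (cases "x' = x")
      case True then show False using luniq[OF that(3)] xy' by blast
    next
      case False then have "x' = y" using xy' by blast
      then show False using luniq[OF that(4)] xy' by blast
    qed
  qed
  define nonleaf where "nonleaf t \<longleftrightarrow> \<not> (\<exists>z. leafat E t z)" for t
  obtain u where uV: "u \<in> V" and un: "nonleaf u"
  proof (rule ccontr)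
    assume H: "\<not> thesis"
    have allleaf: "\<exists>z. leafat E t z" if "t \<in> V" for t
      using H that \<open>\<And>u. u \<in> V \<Longrightarrow> nonleaf u \<Longrightarrow> thesis\<close> unfolding nonleaf_def by blast
    have "V \<noteq> {}" using cV cA by auto
    then obtain x where xV: "x \<in> V" by blast
    then obtain y where lxy: "leafat E x y" using allleaf by blast
    have yV: "y \<in> V" using mem[OF ledge(1)[OF lxy]] by blast
    obtain t where lyt: "leafat E y t" using allleaf[OF yV] by blast
    have "x = t" using luniq[OF lyt ledge(2)[OF lxy]] .
    then show False using two_leaf[OF xV yV lxy] lyt by blast
  qed
  have charP: "(y \<in> A \<longleftrightarrow> t \<in> A) \<longleftrightarrow> leafat E y t"
    if tV: "t \<in> V" and tn: "nonleaf t" and yV: "y \<in> V" and yt: "y \<noteq> t" for t y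
  proof
    assume "y \<in> A \<longleftrightarrow> t \<in> A"
    then have "Rel E t y" using rel[OF tV yV] yt by blast
    then show "leafat E y t" using RL[OF tV yV] yt tn unfolding nonleaf_def by blast
  next
    assume l: "leafat E y t"
    then have "Rel E y t" unfolding Rel_def leafat_def by blast
    then show "y \<in> A \<longleftrightarrow> t \<in> A" using rel[OF yV tV yt] by blast
  qed
  define Q where "Q = {y \<in> V. (y \<in> A) \<noteq> (u \<in> A)}"
  have cQ: "2 \<le> card Q"
  proof (cases "u \<in> A")
    case True
    then have "Q = B" unfolding Q_def using VAB dj by auto
    then show ?thesis using cB by simp
  next
    case False
    then have "Q = A" unfolding Q_def using VAB dj by auto
    then show ?thesis using cA by simp
  qed
  have fQ: "finite Q" unfolding Q_def using fin by simp
  obtain y1 where y1: "y1 \<in> Q" using two_elem[OF fQ cQ] by blast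
  obtain y2 where y2: "y2 \<in> Q" "y2 \<noteq> y1" using two_elem[OF fQ cQ] by blast
  obtain w where wQ: "w \<in> Q" and wn: "nonleaf w"
  proof (rule ccontr)
    assume H: "\<not> thesis"
    have allleaf: "\<exists>z. leafat E t z" if "t \<in> Q" for t
      using H that \<open>\<And>w. w \<in> Q \<Longrightarrow> nonleaf w \<Longrightarrow> thesis\<close> unfolding nonleaf_def by blast
    have y1V: "y1 \<in> V" and y2V: "y2 \<in> V" using y1 y2 unfolding Q_def by auto
    have "Rel E y1 y2" using rel[OF y1V y2V] y1 y2 unfolding Q_def by auto
    then consider "leafat E y1 y2" | "leafat E y2 y1" | z where "leafat E y1 z" "leafat E y2 z"
      using RL[OF y1V y2V] y2 by metis
    then show False
    proof cases
      case 1
      obtain t where "leafat E y2 t" using allleaf y2 by blast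
      moreover then have "y1 = t" using luniq ledge(2)[OF 1] by blast
      ultimately show False using two_leaf[OF y1V y2V 1] by blast
    next
      case 2
      obtain t where "leafat E y1 t" using allleaf y1 by blast
      moreover then have "y2 = t" using luniq ledge(2)[OF 2] by blast
      ultimately show False using two_leaf[OF y2V y1V 2] by blast
    next
      case (3 z)
      have zV: "z \<in> V" using mem[OF ledge(1)[OF 3(1)]] by blast
      show False
      proof (cases "z = u")
        case True
        have "y1 \<noteq> u" using y1 unfolding Q_def by auto
        then have "(y1 \<in> A \<longleftrightarrow> u \<in> A)" using charP[OF uV un y1V] 3(1) True by blast
        then show False using y1 unfolding Q_def by auto
      next
        case False
        show False
        proof (cases "z \<in> Q")
          case True
          obtain t where lt: "leafat E z t" using allleaf True by blast
          have "y1 = t" using luniq[OF lt] ledge(2)[OF 3(1)] by blast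
          moreover have "y2 = t" using luniq[OF lt] ledge(2)[OF 3(2)] by blast
          ultimately show False using y2 by simp
        next
          case zQ: False
          then have "z \<in> A \<longleftrightarrow> u \<in> A" using zV unfolding Q_def by auto
          then have "leafat E z u" using charP[OF uV un zV False] by blast
          then have "y1 = u" using luniq ledge(2)[OF 3(1)] by blast
          then show False using y1 unfolding Q_def by auto
        qed
      qed
    qed
  qed
  have wV: "w \<in> V" and wA: "(w \<in> A) \<noteq> (u \<in> A)" using wQ unfolding Q_def by auto
  have uw: "u \<noteq> w" using wA by auto
  have euw: "{u, w} \<in> E"
  proof (rule ccontr)
    assume nuw: "{u, w} \<notin> E"
    define P where "P = {x \<in> V. (x \<in> A) = (u \<in> A)}"
    have "P \<subseteq> V" "P \<noteq> {}" "P \<noteq> V" using uV wV wA unfolding P_def by auto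
    then have "\<exists>x\<in>P. \<exists>y\<in>V - P. {x, y} \<in> E" using c[unfolded conn_def, rule_format, of P] by blast
    then obtain x y where xy: "x \<in> P" "y \<in> V - P" "{x, y} \<in> E" by blast
    have yV: "y \<in> V" and yA: "(y \<in> A) \<noteq> (u \<in> A)" and xV: "x \<in> V" and xA: "(x \<in> A) = (u \<in> A)"
      using xy unfolding P_def by auto
    show False
    proof (cases "x = u")
      case True
      then have "y \<noteq> w" using nuw xy by blast
      then have "leafat E y w" using charP[OF wV wn yV] yA wA by blast
      then have "x = w" using luniq xy(3) C by metis
      then show False using True uw by simp
    next
      case False
      then have "leafat E x u" using charP[OF uV un xV] xA by blast
      then have "y = u" using luniq xy(3) by metis
      then show False using xy uV unfolding P_def by auto
    qed
  qed
  define S where "S = {x \<in> V. x \<noteq> u \<and> (x \<in> A) = (u \<in> A)}"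
  have SV: "S \<subseteq> V - {u, w}" unfolding S_def using wA by auto
  have lS: "leafat E x u" if "x \<in> S" for x
    using that charP[OF uV un] unfolding S_def by blast
  have lT: "leafat E x w" if "x \<in> V - {u, w} - S" for x
  proof -
    have "x \<in> V" "x \<noteq> w" "(x \<in> A) \<noteq> (u \<in> A)" using that unfolding S_def by auto
    then show ?thesis using charP[OF wV wn] wA by blast
  qed
  have "E = bsE u w S V"
  proof (rule ext_dbl)
    show "\<forall>e\<in>E. \<exists>x y. e = {x, y}" using w unfolding wfg_def by blast
    show "\<forall>e\<in>bsE u w S V. \<exists>x y. e = {x, y}" using bs_wfg[OF uV wV uw SV] unfolding wfg_def by blast
    fix p q
    show "{p, q} \<in> E \<longleftrightarrow> {p, q} \<in> bsE u w S V"
      unfolding bs_adj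
    proof
      assume e: "{p, q} \<in> E"
      have pV: "p \<in> V" and qV: "q \<in> V" and pq: "p \<noteq> q" using mem[OF e] by auto
      have e': "{q, p} \<in> E" using e C by metis
      show "{p, q} = {u, w} \<or> (p = u \<and> q \<in> S) \<or> (q = u \<and> p \<in> S) \<or>
        (p = w \<and> q \<in> V - {u, w} - S) \<or> (q = w \<and> p \<in> V - {u, w} - S)"
      proof (cases "p \<in> S")
        case True then show ?thesis using luniq[OF lS[OF True] e] by blast
      next
        case pS: False
        show ?thesis
        proof (cases "p \<in> V - {u, w} - S")
          case True then show ?thesis using luniq[OF lT[OF True] e] by blast
        next
          case pT: False
          then have pUW: "p = u \<or> p = w" using pS pV by blast
          show ?thesis
          proof (cases "q \<in> S")
            case True then show ?thesis using luniq[OF lS[OF True] e'] by blast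
          next
            case qS: False
            show ?thesis
            proof (cases "q \<in> V - {u, w} - S")
              case True then show ?thesis using luniq[OF lT[OF True] e'] by blast
            next
              case False
              then have "q = u \<or> q = w" using qS qV by blast
              then have "{p, q} = {u, w}" using pUW pq by (auto simp: C)
              then show ?thesis by blast
            qed
          qed
        qed
      qed
    next
      assume "{p, q} = {u, w} \<or> (p = u \<and> q \<in> S) \<or> (q = u \<and> p \<in> S) \<or>
        (p = w \<and> q \<in> V - {u, w} - S) \<or> (q = w \<and> p \<in> V - {u, w} - S)"
      then show "{p, q} \<in> E"
      proof (elim disjE conjE)
        assume "{p, q} = {u, w}" then show ?thesis using euw by simp
      next
        assume "p = u" "q \<in> S" then show ?thesis using ledge(2)[OF lS] by blast
      next
        assume "q = u" "p \<in> S" then show ?thesis using ledge(1)[OF lS] by blast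
      next
        assume "p = w" "q \<in> V - {u, w} - S" then show ?thesis using ledge(2)[OF lT] by blast
      next
        assume "q = w" "p \<in> V - {u, w} - S" then show ?thesis using ledge(1)[OF lT] by blast
      qed
    qed
  qed
  then show ?thesis unfolding binary_star_bsE using uV wV uw SV by blast
qed



theorem theorem5:
  fixes A B :: "'a set" and n m :: nat and G :: "'a set set"
  assumes "finite A" and "finite B" and "A \<inter> B = {}"
    and "card A = n" and "card B = m" and "n \<ge> 2" and "m \<ge> 2"
    and "G \<in> lc_orbit (A \<union> B) (complete_bipartite A B)"
  shows "((\<forall>H \<in> lc_orbit (A \<union> B) (complete_bipartite A B). card G \<le> card H)
            \<longleftrightarrow> binary_star (A \<union> B) G)
         \<and> (binary_star (A \<union> B) G \<longrightarrow> card G = n + m - 1)"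
proof -
  define V where "V = A \<union> B"
  define K where "K = complete_bipartite A B"
  have fV: "finite V" unfolding V_def using assms by simp
  have cV: "card V = n + m" unfolding V_def using card_Un_disjoint assms by metis
  have cA: "2 \<le> card A" and cB: "2 \<le> card B" using assms by auto
  have Ane: "A \<noteq> {}" and Bne: "B \<noteq> {}" using cA cB by auto
  have Vne: "V \<noteq> {}" unfolding V_def using Ane by simp
  have wK: "wfg V K" unfolding V_def K_def by (rule kb_wfg[OF assms(3)])
  have cK: "conn V K" unfolding V_def K_def by (rule kb_conn[OF assms(3) Ane Bne])
  have inv: "wfg V H \<and> conn V H \<and> (\<forall>x y. x \<noteq> y \<longrightarrow> Rel H x y = Rel K x y)" if "H \<in> lc_orbit V K" for H
    by (rule orbit_inv[OF that wK cK])
  have bound: "card V - 1 \<le> card H" if "H \<in> lc_orbit V K" for H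
    using conn_card[OF fV Vne] inv[OF that] by fastforce
  have bscard: "card E = card V - 1" if bsH: "binary_star V E" for E
  proof -
    obtain a b S where "a \<in> V" "b \<in> V" "a \<noteq> b" "S \<subseteq> V - {a, b}" "E = bsE a b S V"
      using bsH unfolding binary_star_bsE by blast
    then show ?thesis using bs_card[OF fV] by simp
  qed
  obtain a where a: "a \<in> A" using Ane by blast
  obtain b where b: "b \<in> B" using Bne by blast
  have aV: "a \<in> V" and bV: "b \<in> V" unfolding V_def using a b by auto
  define G3 where "G3 = local_compl a (local_compl b (local_compl a K))"
  have G3o: "G3 \<in> lc_orbit V K" unfolding G3_def
    by (intro lc_orbit.step lc_orbit.base aV bV)
  have G3bs: "G3 = bsE a b (A - {a}) V" unfolding G3_def K_def V_def by (rule G3_bs[OF assms(3) a b])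
  have G3c: "card G3 = card V - 1" unfolding G3bs
    by (rule bs_card[OF fV aV bV]) (use a b assms(3) V_def in auto)
  have GO: "G \<in> lc_orbit V K" using assms(8) unfolding V_def K_def .
  have wG: "wfg V G" and cG: "conn V G" and rG: "\<forall>x y. x \<noteq> y \<longrightarrow> Rel G x y = Rel K x y"
    using inv[OF GO] by auto
  have part1: "(\<forall>H \<in> lc_orbit V K. card G \<le> card H) \<longleftrightarrow> binary_star V G"
  proof
    assume min: "\<forall>H \<in> lc_orbit V K. card G \<le> card H"
    then have cg: "card G + 1 \<le> card V" using G3o G3c cV assms(6) by fastforce
    show "binary_star V G"
    proof (rule tree_bs[OF fV V_def assms(3) cA cB wG cG])
      fix p q r assume e: "{p, q} \<in> G" "{q, r} \<in> G" "{r, p} \<in> G"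
      show False by (rule remove_contra[OF fV Vne wG cg e(1) tri_remove[OF wG cG e]])
    next
      fix p q r s assume e: "{p, q} \<in> G" "{q, r} \<in> G" "{r, s} \<in> G" "{s, p} \<in> G" "p \<noteq> r" "q \<noteq> s"
      show False by (rule remove_contra[OF fV Vne wG cg e(1) c4_remove[OF wG cG e]])
    next
      fix x y assume "x \<in> V" "y \<in> V" "x \<noteq> y"
      then show "Rel G x y = (x \<in> A \<longleftrightarrow> y \<in> A)"
        using rG kb_Rel[OF assms(3) assms(1) assms(2) cA cB] unfolding V_def K_def by simp
    qed
  next
    assume "binary_star V G"
    then have "card G = card V - 1" by (rule bscard)
    then show "\<forall>H \<in> lc_orbit V K. card G \<le> card H" using bound by simp
  qed
  have part2: "binary_star V G \<longrightarrow> card G = n + m - 1" using bscard cV by simp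
  show ?thesis using part1 part2 unfolding V_def K_def by blast
qed


end
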